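(* Not every small set is small$^\star$; that is, $\mathcal S^\star\subsetneq\mathcal S$: there exists a small set $X\subseteq 2^\omega$ which is not small$^\star$.
   Context: A set $X\subseteq 2^\omega$ is small ($X\in\mathcal S$) if there is a sequence $\{(I_n,J_n):n\in\omega\}$ such that each $I_n$ is a finite subset of $\omega$, $I_n\cap I_m=\emptyset$ for $n\neq m$, $J_n\subseteq 2^{I_n}$ (functions from $I_n$ to $\{0,1\}$), $\sum_{n\in\omega}\frac{|J_n|}{2^{|I_n|}}<\infty$, and $X\subseteq\{x\in 2^\omega: \text{for infinitely many } n,\ x\restriction I_n\in J_n\}$. A set $X$ is small$^\star$ ($X\in\mathcal S^\star$) if it is small witnessed by such a sequence in which additionally the $I_n$ are consecutive intervals, i.e. there is a strictly increasing sequence of integers $\{k_n:n\in\omega\}$ with $I_n=[k_n,k_{n+1})$ for every $n$. *)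

theory Defs
  imports "HOL-Analysis.Analysis" "HOL-Library.FuncSet"
begin

text \<open>A function from a finite
  set I to {0,1} is represented as an extensional function in I ->E UNIV
  (value undefined outside I); the restriction of x to I is restrict x I.\<close>

definition small_witness :: "(nat \<Rightarrow> nat set) \<Rightarrow> (nat \<Rightarrow> (nat \<Rightarrow> bool) set) \<Rightarrow> bool" where
  "small_witness I J \<longleftrightarrow>
     (\<forall>n. finite (I n)) \<and>
     (\<forall>n m. n \<noteq> m \<longrightarrow> I n \<inter> I m = {}) \<and>
     (\<forall>n. J n \<subseteq> (I n \<rightarrow>\<^sub>E (UNIV :: bool set))) \<and>
     summable (\<lambda>n. real (card (J n)) / 2 ^ card (I n))"

definition covered_by :: "(nat \<Rightarrow> nat set) \<Rightarrow> (nat \<Rightarrow> (nat \<Rightarrow> bool) set) \<Rightarrow> (nat \<Rightarrow> bool) set" where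
  "covered_by I J = {x. \<exists>\<^sub>\<infinity>n. restrict x (I n) \<in> J n}"

definition small :: "(nat \<Rightarrow> bool) set \<Rightarrow> bool" where
  "small X \<longleftrightarrow> (\<exists>I J. small_witness I J \<and> X \<subseteq> covered_by I J)"

definition small_star :: "(nat \<Rightarrow> bool) set \<Rightarrow> bool" where
  "small_star X \<longleftrightarrow> (\<exists>k :: nat \<Rightarrow> nat. \<exists>J. strict_mono k \<and>
      small_witness (\<lambda>n. {k n..<k (Suc n)}) J \<and>
      X \<subseteq> covered_by (\<lambda>n. {k n..<k (Suc n)}) J)"

end

theory Submission
  imports Defs
begin


lemma card_PiE_bool: "finite V \<Longrightarrow> card (V \<rightarrow>\<^sub>E (UNIV::bool set)) = 2 ^ card V"
  by (simp add: card_PiE)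

lemma card_pre:
  fixes V P :: "'a set"
  assumes V: "finite V" and PV: "P \<subseteq> V" and S: "S \<subseteq> P \<rightarrow>\<^sub>E (UNIV::bool set)"
  shows "card {z \<in> V \<rightarrow>\<^sub>E (UNIV::bool set). restrict z P \<in> S} = card S * 2 ^ card (V - P)"
proof -
  define f where "f = (\<lambda>z::'a\<Rightarrow>bool. (restrict z P, restrict z (V - P)))"
  define g where "g = (\<lambda>(s,t) (i::'a). if i \<in> P then s i else (t i :: bool))"
  define D where "D = {z \<in> V \<rightarrow>\<^sub>E (UNIV::bool set). restrict z P \<in> S}"
  define R where "R = S \<times> ((V - P) \<rightarrow>\<^sub>E (UNIV::bool set))"
  have 1: "g (f z) = z" if z: "z \<in> D" for z
  proof
    fix i
    have zV: "z \<in> V \<rightarrow>\<^sub>E UNIV" using z unfolding D_def by blast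
    show "g (f z) i = z i"
    proof (cases "i \<in> V")
      case True then show ?thesis unfolding f_def g_def by simp
    next
      case False
      then have "i \<notin> P" using PV by blast
      then show ?thesis unfolding f_def g_def using PiE_arb[OF zV False] False by simp
    qed
  qed
  have 2: "f (g st) = st" "g st \<in> D" if st: "st \<in> R" for st
  proof -
    obtain s t where st': "st = (s,t)" "s \<in> S" "t \<in> V - P \<rightarrow>\<^sub>E UNIV" using st unfolding R_def by blast
    have s: "s \<in> P \<rightarrow>\<^sub>E UNIV" using st' S by blast
    have a: "restrict (g (s,t)) P = s"
    proof
      fix i show "restrict (g (s,t)) P i = s i"
        using PiE_arb[OF s, of i] unfolding g_def by simp
    qed
    have b: "restrict (g (s,t)) (V - P) = t"
    proof
      fix i show "restrict (g (s,t)) (V - P) i = t i"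
        using PiE_arb[OF st'(3), of i] unfolding g_def by simp
    qed
    show "f (g st) = st" unfolding f_def using a b st' by simp
    have ext: "g (s,t) \<in> extensional V"
    unfolding extensional_def
    proof (intro CollectI allI impI)
      fix i assume "i \<notin> V"
      then have "i \<notin> P" "i \<notin> V - P" using PV by blast+
      then show "g (s,t) i = undefined" using PiE_arb[OF st'(3)] unfolding g_def by simp
    qed
    have "g (s,t) \<in> V \<rightarrow>\<^sub>E UNIV" using ext by (simp add: PiE_iff)
    then show "g st \<in> D" unfolding D_def using a st' by simp
  qed
  have 3: "f z \<in> R" if "z \<in> D" for z
    using that unfolding D_def R_def f_def by (simp add: restrict_PiE_iff)
  have "bij_betw f D R"
    by (rule bij_betw_byWitness[where f' = g]) (use 1 2 3 in blast)+
  then have "card D = card R" by (rule bij_betw_same_card)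
  also have "\<dots> = card S * 2 ^ card (V - P)"
    unfolding R_def using V by (simp add: card_cartesian_product card_PiE_bool)
  finally show ?thesis unfolding D_def .
qed

lemma good_half:
  assumes W: "finite W" and Ms: "finite Ms" and PW: "\<forall>m\<in>Ms. P m \<subseteq> W"
    and K: "\<forall>m\<in>Ms. K m \<subseteq> P m \<rightarrow>\<^sub>E (UNIV::bool set)"
    and sm: "(\<Sum>m\<in>Ms. real (card (K m)) / 2 ^ card (P m)) < 1/2"
  shows "real (card {z \<in> W \<rightarrow>\<^sub>E (UNIV::bool set). \<forall>m\<in>Ms. restrict z (P m) \<notin> K m}) > 2 ^ card W / 2"
proof -
  define Bad where "Bad = (\<Union>m\<in>Ms. {z \<in> W \<rightarrow>\<^sub>E (UNIV::bool set). restrict z (P m) \<in> K m})"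
  have Bsub: "Bad \<subseteq> W \<rightarrow>\<^sub>E UNIV" unfolding Bad_def by auto
  have eq: "{z \<in> W \<rightarrow>\<^sub>E (UNIV::bool set). \<forall>m\<in>Ms. restrict z (P m) \<notin> K m} = (W \<rightarrow>\<^sub>E UNIV) - Bad"
    unfolding Bad_def by auto
  have fin: "finite (W \<rightarrow>\<^sub>E (UNIV::bool set))" using W by (simp add: finite_PiE)
  have "card Bad \<le> (\<Sum>m\<in>Ms. card {z \<in> W \<rightarrow>\<^sub>E (UNIV::bool set). restrict z (P m) \<in> K m})"
    unfolding Bad_def by (rule card_UN_le[OF Ms])
  also have "\<dots> = (\<Sum>m\<in>Ms. card (K m) * 2 ^ card (W - P m))"
    by (rule sum.cong) (use card_pre[OF W] PW K in auto)
  finally have "real (card Bad) \<le> real (\<Sum>m\<in>Ms. card (K m) * 2 ^ card (W - P m))"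
    by (simp only: of_nat_le_iff)
  also have "\<dots> = (\<Sum>m\<in>Ms. real (card (K m)) * 2 ^ card (W - P m))"
    by simp
  also have "\<dots> = (\<Sum>m\<in>Ms. 2 ^ card W * (real (card (K m)) / 2 ^ card (P m)))"
  proof (rule sum.cong)
    fix m assume m: "m \<in> Ms"
    have fP: "finite (P m)" using PW m W finite_subset by blast
    have "card W = card (W - P m) + card (P m)"
      using card_Diff_subset[OF fP] PW m card_mono[OF W, of "P m"] by auto
    then have "(2::real) ^ card W = 2 ^ card (W - P m) * 2 ^ card (P m)" by (simp add: power_add)
    then show "real (card (K m)) * 2 ^ card (W - P m) = 2 ^ card W * (real (card (K m)) / 2 ^ card (P m))"
      by simp
  qed simp
  also have "\<dots> = 2 ^ card W * (\<Sum>m\<in>Ms. real (card (K m)) / 2 ^ card (P m))"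
    by (simp add: sum_distrib_left)
  also have "\<dots> < 2 ^ card W * (1/2)" using sm by simp
  finally have b: "real (card Bad) < 2 ^ card W / 2" by simp
  have "card ((W \<rightarrow>\<^sub>E UNIV) - Bad) = 2 ^ card W - card Bad"
    using card_Diff_subset[OF finite_subset[OF Bsub fin] Bsub] card_PiE_bool[OF W] by simp
  moreover have "card Bad \<le> 2 ^ card W" using card_mono[OF fin Bsub] card_PiE_bool[OF W] by simp
  ultimately have "real (card ((W \<rightarrow>\<^sub>E UNIV) - Bad)) = 2 ^ card W - real (card Bad)"
    by (simp add: of_nat_diff)
  then show ?thesis using eq b by simp
qed

lemma proj_half:
  assumes W: "finite W" and AW: "A \<subseteq> W" and S: "S \<subseteq> W \<rightarrow>\<^sub>E (UNIV::bool set)"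
    and c: "real (card S) > 2 ^ card W / 2"
  shows "real (card ((\<lambda>z. restrict z A) ` S)) > 2 ^ card A / 2"
proof -
  let ?G = "(\<lambda>z. restrict z A) ` S"
  have G: "?G \<subseteq> A \<rightarrow>\<^sub>E UNIV" by auto
  have "S \<subseteq> {z \<in> W \<rightarrow>\<^sub>E (UNIV::bool set). restrict z A \<in> ?G}" using S by auto
  then have "card S \<le> card {z \<in> W \<rightarrow>\<^sub>E (UNIV::bool set). restrict z A \<in> ?G}"
    by (intro card_mono) (use W in \<open>auto simp: finite_PiE\<close>)
  also have "\<dots> = card ?G * 2 ^ card (W - A)" by (rule card_pre[OF W AW G])
  finally have 1: "real (card S) \<le> real (card ?G) * 2 ^ card (W - A)"
    by (metis of_nat_le_iff of_nat_mult of_nat_numeral of_nat_power)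
  have fA: "finite A" using W AW finite_subset by blast
  have "card W = card (W - A) + card A"
    using card_Diff_subset[OF fA] AW card_mono[OF W AW] by auto
  then have 2: "(2::real) ^ card W = 2 ^ card (W - A) * 2 ^ card A" by (simp add: power_add)
  define p :: real where "p = 2 ^ card (W - A)"
  have p: "p > 0" unfolding p_def by simp
  have "2 ^ card A * p < (2 * real (card ?G)) * p"
  proof -
    have "2 ^ card A * p = 2 ^ card W" using 2 unfolding p_def by simp
    also have "\<dots> < 2 * real (card S)" using c by simp
    also have "\<dots> \<le> 2 * (real (card ?G) * p)" using 1 unfolding p_def by simp
    finally show ?thesis by simp
  qed
  then have "2 ^ card A < 2 * real (card ?G)" by (simp only: mult_less_cancel_right_pos[OF p])
  then show ?thesis by linarith
qed


lemma combine:
  fixes fa fb :: "nat \<Rightarrow> nat"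
  assumes ia: "inj_on fa {..<n}" and ib: "inj_on fb {..<n}"
    and GA: "GA \<subseteq> fa ` {..<n} \<rightarrow>\<^sub>E (UNIV::bool set)" and GB: "GB \<subseteq> fb ` {..<n} \<rightarrow>\<^sub>E (UNIV::bool set)"
    and cA: "real (card GA) > 2 ^ card (fa ` {..<n}) / 2"
    and cB: "real (card GB) > 2 ^ card (fb ` {..<n}) / 2"
  shows "\<exists>u\<in>GA. \<exists>v\<in>GB. \<forall>j<n. u (fa j) = v (fb j)"
proof -
  have caA: "card (fa ` {..<n}) = n" using ia by (simp add: card_image)
  have caB: "card (fb ` {..<n}) = n" using ib by (simp add: card_image)
  let ?T = "\<lambda>f u. restrict (u \<circ> f) {..<n}"
  have injA: "inj_on (?T fa) GA"
  proof
    fix u u' assume u: "u \<in> GA" and u': "u' \<in> GA" and e: "?T fa u = ?T fa u'"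
    show "u = u'"
    proof
      fix i show "u i = u' i"
      proof (cases "i \<in> fa ` {..<n}")
        case True
        then obtain j where j: "j \<in> {..<n}" "i = fa j" using True by blast
        have "restrict (u \<circ> fa) {..<n} j = restrict (u' \<circ> fa) {..<n} j" using e by (rule fun_cong)
        then show ?thesis using j by simp
      next
        case False
        have "u i = undefined" by (rule PiE_arb[OF subsetD[OF GA u] False])
        moreover have "u' i = undefined" by (rule PiE_arb[OF subsetD[OF GA u'] False])
        ultimately show ?thesis by simp
      qed
    qed
  qed
  have injB: "inj_on (?T fb) GB"
  proof
    fix u u' assume u: "u \<in> GB" and u': "u' \<in> GB" and e: "?T fb u = ?T fb u'"
    show "u = u'"
    proof
      fix i show "u i = u' i"
      proof (cases "i \<in> fb ` {..<n}")
        case True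
        then obtain j where j: "j \<in> {..<n}" "i = fb j" using True by blast
        have "restrict (u \<circ> fb) {..<n} j = restrict (u' \<circ> fb) {..<n} j" using e by (rule fun_cong)
        then show ?thesis using j by simp
      next
        case False
        have "u i = undefined" by (rule PiE_arb[OF subsetD[OF GB u] False])
        moreover have "u' i = undefined" by (rule PiE_arb[OF subsetD[OF GB u'] False])
        ultimately show ?thesis by simp
      qed
    qed
  qed
  let ?TA = "?T fa ` GA" and ?TB = "?T fb ` GB"
  have mem: "\<And>f u. ?T f u \<in> {..<n} \<rightarrow>\<^sub>E (UNIV::bool set)" by (simp only: restrict_PiE_iff) blast
  have sub: "?TA \<union> ?TB \<subseteq> {..<n} \<rightarrow>\<^sub>E (UNIV::bool set)" using mem by blast
  have fin: "finite ({..<n} \<rightarrow>\<^sub>E (UNIV::bool set))" by (simp add: finite_PiE)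
  have finA: "finite ?TA" by (rule finite_subset[OF _ fin]) (use sub in blast)
  have finB: "finite ?TB" by (rule finite_subset[OF _ fin]) (use sub in blast)
  have c1: "card (?TA \<union> ?TB) \<le> 2 ^ n"
  proof -
    have "card (?TA \<union> ?TB) \<le> card ({..<n} \<rightarrow>\<^sub>E (UNIV::bool set))" by (rule card_mono[OF fin sub])
    also have "\<dots> = 2 ^ n" using card_PiE_bool[of "{..<n}"] by simp
    finally show ?thesis .
  qed
  have c2: "card ?TA = card GA" using injA by (rule card_image)
  have c3: "card ?TB = card GB" using injB by (rule card_image)
  have c4: "card ?TA + card ?TB = card (?TA \<union> ?TB) + card (?TA \<inter> ?TB)"
    by (rule card_Un_Int[OF finA finB])
  have "real (card GA) + real (card GB) > 2 ^ n" using cA cB caA caB by simp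
  then have "real (card GA + card GB) > real (2 ^ n)" by simp
  then have "card GA + card GB > 2 ^ n" by (simp only: of_nat_less_iff)
  then have "card (?TA \<inter> ?TB) \<noteq> 0" using c1 c2 c3 c4 by linarith
  then have "?TA \<inter> ?TB \<noteq> {}" by (metis card.empty)
  then obtain w where "w \<in> ?TA \<inter> ?TB" by blast
  then obtain u v where uv: "u \<in> GA" "v \<in> GB" "?T fa u = ?T fb v" by blast
  have "\<forall>j<n. u (fa j) = v (fb j)"
  proof (intro allI impI)
    fix j assume j: "j < n"
    have "?T fa u j = ?T fb v j" using uv(3) by (rule fun_cong)
    then show "u (fa j) = v (fb j)" using j by simp
  qed
  then show ?thesis using uv(1,2) by blast
qed



definition aa :: "nat \<Rightarrow> nat \<Rightarrow> nat" where "aa n i = 2 * (2 ^ n + i)"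
definition bb :: "nat \<Rightarrow> nat \<Rightarrow> nat" where "bb n i = 2 * (4 * 2 ^ n + i) + 1"
definition AI :: "nat \<Rightarrow> nat set" where "AI n = aa n ` {..<n} \<union> bb n ` {..<n}"
definition AJ :: "nat \<Rightarrow> (nat \<Rightarrow> bool) set" where
  "AJ n = {y \<in> AI n \<rightarrow>\<^sub>E (UNIV::bool set). \<forall>i<n. y (aa n i) = y (bb n i)}"

lemma i_lt_pow: "i < n \<Longrightarrow> i < (2::nat) ^ n"
  using less_exp[of n] by linarith

lemma aa_range: "i < n \<Longrightarrow> 2 ^ (n+1) \<le> aa n i \<and> aa n i < 2 ^ (n+2)"
  using i_lt_pow[of i n] unfolding aa_def by simp

lemma bb_range: "i < n \<Longrightarrow> 2 ^ (n+3) < bb n i \<and> bb n i < 2 ^ (n+4)"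
  using i_lt_pow[of i n] unfolding bb_def by (simp add: power_add)

lemma aa_inj: "inj_on (aa n) {..<n}" unfolding aa_def inj_on_def by simp
lemma bb_inj: "inj_on (bb n) {..<n}" unfolding bb_def inj_on_def by simp

lemma aa_bb: "aa n i \<noteq> bb m j" unfolding aa_def bb_def by presburger

lemma aa_eq: assumes "i < n" "j < m" "aa n i = aa m j" shows "n = m"
proof (rule ccontr)
  assume "n \<noteq> m"
  then consider "n < m" | "m < n" by linarith
  then show False
  proof cases
    case 1
    then have "(2::nat) ^ (n+2) \<le> 2 ^ (m+1)" by (intro power_increasing) auto
    then show False using aa_range[OF assms(1)] aa_range[OF assms(2)] assms(3) by linarith
  next
    case 2
    then have "(2::nat) ^ (m+2) \<le> 2 ^ (n+1)" by (intro power_increasing) auto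
    then show False using aa_range[OF assms(1)] aa_range[OF assms(2)] assms(3) by linarith
  qed
qed

lemma bb_eq: assumes "i < n" "j < m" "bb n i = bb m j" shows "n = m"
proof (rule ccontr)
  assume "n \<noteq> m"
  then consider "n < m" | "m < n" by linarith
  then show False
  proof cases
    case 1
    then have "(2::nat) ^ (n+4) \<le> 2 ^ (m+3)" by (intro power_increasing) auto
    then show False using bb_range[OF assms(1)] bb_range[OF assms(2)] assms(3) by linarith
  next
    case 2
    then have "(2::nat) ^ (m+4) \<le> 2 ^ (n+3)" by (intro power_increasing) auto
    then show False using bb_range[OF assms(1)] bb_range[OF assms(2)] assms(3) by linarith
  qed
qed

lemma AI_disj: assumes nm: "n \<noteq> m" shows "AI n \<inter> AI m = {}"
proof (rule ccontr)
  assume "AI n \<inter> AI m \<noteq> {}"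
  then obtain x where x: "x \<in> AI n" "x \<in> AI m" by blast
  from x(1) obtain i where i: "i < n" "x = aa n i \<or> x = bb n i" unfolding AI_def by blast
  from x(2) obtain j where j: "j < m" "x = aa m j \<or> x = bb m j" unfolding AI_def by blast
  from i(2) j(2) show False
    using aa_eq[OF i(1) j(1)] bb_eq[OF i(1) j(1)] aa_bb[of n i m j] aa_bb[of m j n i] nm by metis
qed

lemma card_AI: "card (AI n) = 2 * n"
proof -
  have "aa n ` {..<n} \<inter> bb n ` {..<n} = {}" using aa_bb by blast
  then have "card (AI n) = card (aa n ` {..<n}) + card (bb n ` {..<n})"
    unfolding AI_def by (intro card_Un_disjoint) auto
  also have "\<dots> = 2 * n" using card_image[OF aa_inj] card_image[OF bb_inj] by simp
  finally show ?thesis .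
qed

lemma card_AJ: "card (AJ n) \<le> 2 ^ n"
proof -
  let ?A = "aa n ` {..<n}"
  have inj: "inj_on (\<lambda>y. restrict y ?A) (AJ n)"
  proof
    fix y y' assume y: "y \<in> AJ n" and y': "y' \<in> AJ n" and e: "restrict y ?A = restrict y' ?A"
    show "y = y'"
    proof
      fix x
      have yP: "y \<in> AI n \<rightarrow>\<^sub>E UNIV" and y'P: "y' \<in> AI n \<rightarrow>\<^sub>E UNIV" using y y' unfolding AJ_def by auto
      have ya: "\<forall>i<n. y (aa n i) = y (bb n i)" "\<forall>i<n. y' (aa n i) = y' (bb n i)"
        using y y' unfolding AJ_def by auto
      have onA: "y a = y' a" if "a \<in> ?A" for a using fun_cong[OF e, of a] that by simp
      show "y x = y' x"
      proof (cases "x \<in> AI n")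
        case True
        then consider "x \<in> ?A" | "x \<in> bb n ` {..<n}" unfolding AI_def by blast
        then show ?thesis
        proof cases
          case 1 then show ?thesis using onA by blast
        next
          case 2
          then obtain i where i: "i < n" "x = bb n i" by blast
          have "y (aa n i) = y' (aa n i)" using onA i by blast
          then show ?thesis using ya i by simp
        qed
      next
        case False
        then show ?thesis using PiE_arb[OF yP False] PiE_arb[OF y'P False] by simp
      qed
    qed
  qed
  have sub: "(\<lambda>y. restrict y ?A) ` AJ n \<subseteq> ?A \<rightarrow>\<^sub>E (UNIV::bool set)" by auto
  have "card (AJ n) = card ((\<lambda>y. restrict y ?A) ` AJ n)" using card_image[OF inj] by simp
  also have "\<dots> \<le> card (?A \<rightarrow>\<^sub>E (UNIV::bool set))"
    by (rule card_mono[OF _ sub]) (simp add: finite_PiE)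
  also have "\<dots> = 2 ^ n" using card_PiE_bool[of ?A] card_image[OF aa_inj] by simp
  finally show ?thesis .
qed

lemma sw_AI: "small_witness AI AJ"
  unfolding small_witness_def
proof (intro conjI allI impI)
  fix n show "finite (AI n)" unfolding AI_def by simp
next
  fix n m :: nat assume "n \<noteq> m" then show "AI n \<inter> AI m = {}" by (rule AI_disj)
next
  fix n show "AJ n \<subseteq> AI n \<rightarrow>\<^sub>E UNIV" unfolding AJ_def by blast
next
  show "summable (\<lambda>n. real (card (AJ n)) / 2 ^ card (AI n))"
  proof (rule summable_comparison_test[where g = "\<lambda>n. (1/2::real) ^ n"])
    show "summable (\<lambda>n. (1/2::real) ^ n)" by (rule summable_geometric) simp
    show "\<exists>N. \<forall>n\<ge>N. norm (real (card (AJ n)) / 2 ^ card (AI n)) \<le> (1/2) ^ n"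
    proof (intro exI allI impI)
      fix n :: nat
      have "real (card (AJ n)) \<le> 2 ^ n" using card_AJ[of n]
        by (metis of_nat_le_iff of_nat_numeral of_nat_power)
      then have "real (card (AJ n)) / 2 ^ card (AI n) \<le> 2 ^ n / 2 ^ (2 * n)"
        unfolding card_AI by (intro divide_right_mono) auto
      also have "\<dots> = (1/2) ^ n" by (simp add: power_mult power_divide field_simps power2_eq_square flip: power_mult_distrib)
      finally show "norm (real (card (AJ n)) / 2 ^ card (AI n)) \<le> (1/2) ^ n" by simp
    qed
  qed
qed



lemma seg:
  fixes s :: "nat \<Rightarrow> nat"
  assumes s: "strict_mono s" and i: "s 0 \<le> i"
  shows "\<exists>!h. s h \<le> i \<and> i < s (Suc h)"
proof -
  let ?H = "{h. s h \<le> i}"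
  have fin: "finite ?H"
  proof (rule finite_subset[of _ "{..i}"])
    show "?H \<subseteq> {..i}" using seq_suble[OF s] by (auto intro: le_trans)
  qed simp
  have "0 \<in> ?H" using i by simp
  then have ne: "?H \<noteq> {}" by blast
  define h where "h = Max ?H"
  have h1: "s h \<le> i" using Max_in[OF fin ne] unfolding h_def by simp
  have h2: "i < s (Suc h)"
  proof (rule ccontr)
    assume "\<not> i < s (Suc h)"
    then have "Suc h \<in> ?H" by simp
    then have "Suc h \<le> h" unfolding h_def using Max_ge[OF fin] by blast
    then show False by simp
  qed
  show ?thesis
  proof (rule ex1I[of _ h])
    show "s h \<le> i \<and> i < s (Suc h)" using h1 h2 by simp
  next
    fix h' assume h': "s h' \<le> i \<and> i < s (Suc h')"
    show "h' = h"
    proof (rule ccontr)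
      assume "h' \<noteq> h"
      then consider "h' < h" | "h < h'" by linarith
      then show False
      proof cases
        case 1
        then have "s (Suc h') \<le> s h" using strict_mono_less_eq[OF s] by simp
        then show False using h' h1 by linarith
      next
        case 2
        then have "s (Suc h) \<le> s h'" using strict_mono_less_eq[OF s] by simp
        then show False using h' h2 by linarith
      qed
    qed
  qed
qed

lemma window_exists:
  assumes k: "strict_mono (k :: nat \<Rightarrow> nat)"
  shows "\<exists>j n d. c < j \<and> j < d \<and> c < 2 ^ (n+1) \<and>
     (\<forall>i<n. k c \<le> aa n i \<and> aa n i < k j \<and> k j \<le> bb n i \<and> bb n i < k d)"
proof -
  define j where "j = 4 * (k c + 1) + c + 1"
  have kj: "j \<le> k j" by (rule seq_suble[OF k])
  have kc: "c \<le> k c" by (rule seq_suble[OF k])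
  have "k j \<ge> 1" using kj unfolding j_def by simp
  from ex_power_ivl1[of 2 "k j", OF _ this] obtain e where e: "2 ^ e \<le> k j" "k j < 2 ^ (e+1)" by auto
  have e2: "e \<ge> 2"
  proof (rule ccontr)
    assume "\<not> e \<ge> 2"
    then have "e + 1 \<le> 2" by simp
    then have "(2::nat) ^ (e+1) \<le> 2 ^ 2" by (intro power_increasing) auto
    then show False using e kj unfolding j_def by simp
  qed
  define n where "n = e - 2"
  have en: "e = n + 2" using e2 unfolding n_def by simp
  have e1: "e + 1 = n + 3" using en by simp
  have n1: "2 ^ (n+2) \<le> k j" "k j < 2 ^ (n+3)" using e en e1 by metis+
  define d where "d = 2 ^ (n+4) + j + 1"
  have kd: "d \<le> k d" by (rule seq_suble[OF k])
  have p: "(2::nat) ^ (n+3) = 4 * 2 ^ (n+1)" "(2::nat) ^ (n+2) = 2 * 2 ^ (n+1)" by (simp_all add: power_add)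
  have kj4: "4 * (k c + 1) \<le> k j" using kj unfolding j_def by simp
  have "k j < 4 * 2 ^ (n+1)" using n1(2) p(1) by simp
  then have "4 * (k c + 1) < 4 * 2 ^ (n+1)" using kj4 by (rule le_less_trans[rotated])
  then have kc2: "k c < 2 ^ (n+1)" by simp
  show ?thesis
  proof (intro exI conjI allI impI)
    show "c < j" unfolding j_def by simp
    show "j < d" unfolding d_def by simp
    show "c < 2 ^ (n+1)" using kc kc2 by linarith
    fix i assume i: "i < n"
    note ra = aa_range[OF i] and rb = bb_range[OF i]
    show "k c \<le> aa n i" using ra kc2 by linarith
    show "aa n i < k j" using ra n1 by linarith
    show "k j \<le> bb n i" using rb n1 by linarith
    show "bb n i < k d" using rb kd unfolding d_def by linarith
  qed
qed

lemma window_fill: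
  fixes k :: "nat \<Rightarrow> nat" and K :: "nat \<Rightarrow> (nat \<Rightarrow> bool) set"
  assumes k: "strict_mono k"
    and K: "\<forall>m. K m \<subseteq> {k m..<k (Suc m)} \<rightarrow>\<^sub>E (UNIV::bool set)"
    and cauchy: "\<forall>c\<ge>M. \<forall>d. (\<Sum>m\<in>{c..<d}. real (card (K m)) / 2 ^ card {k m..<k (Suc m)}) < 1/2"
    and Mc: "M \<le> c" and cj: "c < j" and jd: "j < d"
    and pos: "\<forall>i<n. k c \<le> aa n i \<and> aa n i < k j \<and> k j \<le> bb n i \<and> bb n i < k d"
  shows "\<exists>z. (\<forall>m\<in>{c..<d}. restrict z {k m..<k (Suc m)} \<notin> K m) \<and> restrict z (AI n) \<in> AJ n"
proof -
  define P where "P = (\<lambda>m. {k m..<k (Suc m)})"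
  have km: "k a \<le> k b" if "a \<le> b" for a b using strict_mono_less_eq[OF k] that by simp
  define W1 where "W1 = {k c..<k j}"
  define W2 where "W2 = {k j..<k d}"
  define G1 where "G1 = {z \<in> W1 \<rightarrow>\<^sub>E (UNIV::bool set). \<forall>m\<in>{c..<j}. restrict z (P m) \<notin> K m}"
  define G2 where "G2 = {z \<in> W2 \<rightarrow>\<^sub>E (UNIV::bool set). \<forall>m\<in>{j..<d}. restrict z (P m) \<notin> K m}"
  define A where "A = aa n ` {..<n}"
  define B where "B = bb n ` {..<n}"
  have g1: "real (card G1) > 2 ^ card W1 / 2" unfolding G1_def
  proof (rule good_half)
    show "finite W1" unfolding W1_def by simp
    show "finite {c..<j}" by simp
    show "\<forall>m\<in>{c..<j}. P m \<subseteq> W1" unfolding P_def W1_def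
    proof
      fix m assume "m \<in> {c..<j}"
      then have "k c \<le> k m" "k (Suc m) \<le> k j" using km by auto
      then show "{k m..<k (Suc m)} \<subseteq> {k c..<k j}" by auto
    qed
    show "\<forall>m\<in>{c..<j}. K m \<subseteq> P m \<rightarrow>\<^sub>E UNIV" using K unfolding P_def by blast
    show "(\<Sum>m\<in>{c..<j}. real (card (K m)) / 2 ^ card (P m)) < 1 / 2"
      using cauchy Mc unfolding P_def by blast
  qed
  have g2: "real (card G2) > 2 ^ card W2 / 2" unfolding G2_def
  proof (rule good_half)
    show "finite W2" unfolding W2_def by simp
    show "finite {j..<d}" by simp
    show "\<forall>m\<in>{j..<d}. P m \<subseteq> W2" unfolding P_def W2_def
    proof
      fix m assume "m \<in> {j..<d}"
      then have "k j \<le> k m" "k (Suc m) \<le> k d" using km by auto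
      then show "{k m..<k (Suc m)} \<subseteq> {k j..<k d}" by auto
    qed
    show "\<forall>m\<in>{j..<d}. K m \<subseteq> P m \<rightarrow>\<^sub>E UNIV" using K unfolding P_def by blast
    have "M \<le> j" using Mc cj by simp
    then show "(\<Sum>m\<in>{j..<d}. real (card (K m)) / 2 ^ card (P m)) < 1 / 2"
      using cauchy unfolding P_def by blast
  qed
  have AW: "A \<subseteq> W1" unfolding A_def W1_def using pos by auto
  have BW: "B \<subseteq> W2" unfolding B_def W2_def using pos by auto
  have G1s: "G1 \<subseteq> W1 \<rightarrow>\<^sub>E UNIV" unfolding G1_def by blast
  have G2s: "G2 \<subseteq> W2 \<rightarrow>\<^sub>E UNIV" unfolding G2_def by blast
  define GA where "GA = (\<lambda>z. restrict z A) ` G1"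
  define GB where "GB = (\<lambda>z. restrict z B) ` G2"
  have cA: "real (card GA) > 2 ^ card A / 2" unfolding GA_def
    by (rule proj_half[OF _ AW G1s g1]) (simp add: W1_def)
  have cB: "real (card GB) > 2 ^ card B / 2" unfolding GB_def
    by (rule proj_half[OF _ BW G2s g2]) (simp add: W2_def)
  have GAs: "GA \<subseteq> aa n ` {..<n} \<rightarrow>\<^sub>E (UNIV::bool set)" unfolding GA_def A_def by auto
  have GBs: "GB \<subseteq> bb n ` {..<n} \<rightarrow>\<^sub>E (UNIV::bool set)" unfolding GB_def B_def by auto
  obtain u v where uv: "u \<in> GA" "v \<in> GB" "\<forall>i<n. u (aa n i) = v (bb n i)"
    using combine[OF aa_inj bb_inj GAs GBs] cA cB unfolding A_def B_def by blast
  obtain z1 where z1: "z1 \<in> G1" "u = restrict z1 A" using uv(1) unfolding GA_def by blast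
  obtain z2 where z2: "z2 \<in> G2" "v = restrict z2 B" using uv(2) unfolding GB_def by blast
  define z where "z = (\<lambda>i. if i < k j then z1 i else z2 i)"
  show ?thesis
  proof (intro exI conjI ballI)
    fix m assume m: "m \<in> {c..<d}"
    show "restrict z {k m..<k (Suc m)} \<notin> K m"
    proof (cases "m < j")
      case True
      have "k (Suc m) \<le> k j" using km True by simp
      then have "restrict z {k m..<k (Suc m)} = restrict z1 (P m)"
        unfolding P_def z_def by (intro restrict_ext) auto
      moreover have "m \<in> {c..<j}" using m True by simp
      ultimately show ?thesis using z1(1) unfolding G1_def by auto
    next
      case False
      have "k j \<le> k m" using km False by simp
      then have "restrict z {k m..<k (Suc m)} = restrict z2 (P m)"
        unfolding P_def z_def by (intro restrict_ext) auto
      moreover have "m \<in> {j..<d}" using m False by simp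
      ultimately show ?thesis using z2(1) unfolding G2_def by auto
    qed
  next
    show "restrict z (AI n) \<in> AJ n"
      unfolding AJ_def
    proof (intro CollectI conjI allI impI)
      show "restrict z (AI n) \<in> AI n \<rightarrow>\<^sub>E UNIV" by simp
      fix i assume i: "i < n"
      have ai: "aa n i \<in> AI n" "bb n i \<in> AI n" unfolding AI_def using i by auto
      have aA: "aa n i \<in> A" unfolding A_def using i by auto
      have bB: "bb n i \<in> B" unfolding B_def using i by auto
      have "z (aa n i) = z1 (aa n i)" unfolding z_def using pos i by auto
      also have "\<dots> = u (aa n i)" using z1(2) aA by simp
      also have "\<dots> = v (bb n i)" using uv(3) i by simp
      also have "\<dots> = z2 (bb n i)" using z2(2) bB by simp
      also have "\<dots> = z (bb n i)" unfolding z_def using pos i by (auto simp: not_less)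
      finally show "restrict z (AI n) (aa n i) = restrict z (AI n) (bb n i)" using ai by simp
    qed
  qed
qed



theorem mainTheorem3:
  shows "\<exists>X :: (nat \<Rightarrow> bool) set. small X \<and> \<not> small_star X"
proof (intro exI conjI)
  show "small (covered_by AI AJ)" unfolding small_def using sw_AI by blast
  show "\<not> small_star (covered_by AI AJ)"
  proof
    assume "small_star (covered_by AI AJ)"
    then obtain k :: "nat \<Rightarrow> nat" and K where k: "strict_mono k"
      and sw: "small_witness (\<lambda>n. {k n..<k (Suc n)}) K"
      and cov: "covered_by AI AJ \<subseteq> covered_by (\<lambda>n. {k n..<k (Suc n)}) K"
      unfolding small_star_def by blast
    define \<mu> where "\<mu> = (\<lambda>m. real (card (K m)) / 2 ^ card {k m..<k (Suc m)})"
    have Ksub: "\<forall>m. K m \<subseteq> {k m..<k (Suc m)} \<rightarrow>\<^sub>E (UNIV::bool set)"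
      using sw unfolding small_witness_def by blast
    have summ: "summable \<mu>" using sw unfolding small_witness_def \<mu>_def by blast
    have C: "\<forall>e>0. \<exists>N. \<forall>m\<ge>N. \<forall>n. norm (sum \<mu> {m..<n}) < e" using summ by (simp only: summable_Cauchy)
    have h0: "(1/2::real) > 0" by simp
    obtain M where M: "\<forall>c\<ge>M. \<forall>d. norm (sum \<mu> {c..<d}) < 1/2"
      using C h0 by blast
    have cauchy: "\<forall>c\<ge>M. \<forall>d. (\<Sum>m\<in>{c..<d}. real (card (K m)) / 2 ^ card {k m..<k (Suc m)}) < 1/2"
    proof (intro allI impI)
      fix c d :: nat assume "M \<le> c"
      then have "norm (sum \<mu> {c..<d}) < 1/2" using M by blast
      moreover have "sum \<mu> {c..<d} \<le> norm (sum \<mu> {c..<d})" by simp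
      ultimately show "(\<Sum>m\<in>{c..<d}. real (card (K m)) / 2 ^ card {k m..<k (Suc m)}) < 1/2"
        unfolding \<mu>_def by linarith
    qed
    define WP where "WP = (\<lambda>c j n d. c < j \<and> j < d \<and> c < (2::nat) ^ (n+1) \<and>
       (\<forall>i<n. k c \<le> aa n i \<and> aa n i < k j \<and> k j \<le> bb n i \<and> bb n i < k d))"
    have ex: "\<forall>c. \<exists>t. WP c (fst t) (fst (snd t)) (snd (snd t))"
    proof
      fix c
      obtain j n d where "WP c j n d" using window_exists[OF k, of c] unfolding WP_def by blast
      then show "\<exists>t. WP c (fst t) (fst (snd t)) (snd (snd t))" by (intro exI[of _ "(j,n,d)"]) simp
    qed
    obtain F where F: "\<forall>c. WP c (fst (F c)) (fst (snd (F c))) (snd (snd (F c)))"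
      using choice[OF ex] by blast
    define jf where "jf = (\<lambda>c. fst (F c))"
    define nf where "nf = (\<lambda>c. fst (snd (F c)))"
    define df where "df = (\<lambda>c. snd (snd (F c)))"
    have W: "WP c (jf c) (nf c) (df c)" for c using F unfolding jf_def nf_def df_def by blast
    have zex: "\<forall>c. \<exists>z. M \<le> c \<longrightarrow> (\<forall>m\<in>{c..<df c}. restrict z {k m..<k (Suc m)} \<notin> K m)
                 \<and> restrict z (AI (nf c)) \<in> AJ (nf c)"
    proof
      fix c
      show "\<exists>z. M \<le> c \<longrightarrow> (\<forall>m\<in>{c..<df c}. restrict z {k m..<k (Suc m)} \<notin> K m)
                 \<and> restrict z (AI (nf c)) \<in> AJ (nf c)"
      proof (cases "M \<le> c")
        case True
        have w: "c < jf c" "jf c < df c"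
          "\<forall>i<nf c. k c \<le> aa (nf c) i \<and> aa (nf c) i < k (jf c) \<and> k (jf c) \<le> bb (nf c) i \<and> bb (nf c) i < k (df c)"
          using W[of c] unfolding WP_def by blast+
        from window_fill[OF k Ksub cauchy True w(1) w(2) w(3)] show ?thesis by blast
      qed simp
    qed
    obtain Z where Z: "\<forall>c. M \<le> c \<longrightarrow> (\<forall>m\<in>{c..<df c}. restrict (Z c) {k m..<k (Suc m)} \<notin> K m)
                 \<and> restrict (Z c) (AI (nf c)) \<in> AJ (nf c)"
      using choice[OF zex] by blast
    define cs where "cs = (\<lambda>h. (df ^^ h) M)"
    have csS: "cs (Suc h) = df (cs h)" for h unfolding cs_def by simp
    have cs0: "cs 0 = M" unfolding cs_def by simp
    have dlt: "c < df c" for c using W[of c] unfolding WP_def by linarith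
    have smc: "strict_mono cs" unfolding strict_mono_Suc_iff using csS dlt by simp
    have csM: "M \<le> cs h" for h using strict_mono_less_eq[OF smc, of 0 h] cs0 by simp
    have csh: "h \<le> cs h" for h by (rule seq_suble[OF smc])
    have smk: "strict_mono (\<lambda>h. k (cs h))" unfolding strict_mono_Suc_iff
      using strict_monoD[OF k] strict_monoD[OF smc] by simp
    define x where "x = (\<lambda>i. Z (cs (THE h. k (cs h) \<le> i \<and> i < k (cs (Suc h)))) i)"
    have xw: "x i = Z (cs h) i" if "k (cs h) \<le> i" "i < k (cs (Suc h))" for h i
    proof -
      have "k (cs 0) \<le> k (cs h)" using strict_mono_less_eq[OF smk, of 0 h] by simp
      then have "k (cs 0) \<le> i" using that by linarith
      then have u: "\<exists>!h. k (cs h) \<le> i \<and> i < k (cs (Suc h))" using seg[OF smk] by simp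
      have "(THE h. k (cs h) \<le> i \<and> i < k (cs (Suc h))) = h"
        by (rule the1_equality[OF u]) (use that in simp)
      then show ?thesis unfolding x_def by simp
    qed
    have inX: "x \<in> covered_by AI AJ"
      unfolding covered_by_def mem_Collect_eq INFM_nat
    proof
      fix N
      define h where "h = (2::nat) ^ (N+2)"
      define c where "c = cs h"
      define n where "n = nf c"
      have Wc: "c < jf c" "jf c < df c" "c < 2 ^ (n+1)"
          "\<forall>i<n. k c \<le> aa n i \<and> aa n i < k (jf c) \<and> k (jf c) \<le> bb n i \<and> bb n i < k (df c)"
        using W[of c] unfolding WP_def n_def by blast+
      have "(2::nat) ^ (N+2) < 2 ^ (n+1)" using csh[of h] Wc(3) unfolding h_def c_def by linarith
      then have "N + 2 < n + 1" by (rule power_less_imp_less_exp[rotated]) simp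
      then have Nn: "N < n" by simp
      have "restrict x (AI n) = restrict (Z c) (AI n)"
      proof (rule restrict_ext)
        fix i assume i: "i \<in> AI n"
        then obtain i' where i': "i' < n" "i = aa n i' \<or> i = bb n i'" unfolding AI_def by blast
        have kjd: "k (jf c) < k (df c)" using strict_monoD[OF k Wc(2)] .
        have a: "k c \<le> aa n i' \<and> aa n i' < k (jf c) \<and> k (jf c) \<le> bb n i' \<and> bb n i' < k (df c)"
          using Wc(4) i'(1) by blast
        have "k c \<le> i \<and> i < k (df c)" using i'(2) a kjd by auto
        then show "x i = Z c i" using xw[of h i] csS[of h] unfolding c_def by auto
      qed
      moreover have "restrict (Z c) (AI n) \<in> AJ n" using Z csM[of h] unfolding c_def n_def by blast
      ultimately show "\<exists>n>N. restrict x (AI n) \<in> AJ n" using Nn by auto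
    qed
    have notK: "restrict x {k m..<k (Suc m)} \<notin> K m" if m: "M \<le> m" for m
    proof -
      have "cs 0 \<le> m" using m cs0 by simp
      then obtain h where h: "cs h \<le> m" "m < cs (Suc h)" using seg[OF smc] by blast
      have "restrict x {k m..<k (Suc m)} = restrict (Z (cs h)) {k m..<k (Suc m)}"
      proof (rule restrict_ext)
        fix i assume i: "i \<in> {k m..<k (Suc m)}"
        have "k (cs h) \<le> k m" using strict_mono_less_eq[OF k] h(1) by simp
        moreover have "Suc m \<le> cs (Suc h)" using h(2) by simp
        then have "k (Suc m) \<le> k (cs (Suc h))" using strict_mono_less_eq[OF k] by blast
        ultimately show "x i = Z (cs h) i" using i xw[of h i] by simp
      qed
      moreover have "m \<in> {cs h..<df (cs h)}" using h csS[of h] by simp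
      moreover have "\<forall>m\<in>{cs h..<df (cs h)}. restrict (Z (cs h)) {k m..<k (Suc m)} \<notin> K m"
        using Z csM[of h] by blast
      ultimately show ?thesis by simp
    qed
    have "x \<notin> covered_by (\<lambda>n. {k n..<k (Suc n)}) K"
    proof
      assume "x \<in> covered_by (\<lambda>n. {k n..<k (Suc n)}) K"
      then have "\<exists>\<^sub>\<infinity>m. restrict x {k m..<k (Suc m)} \<in> K m" unfolding covered_by_def by simp
      then obtain m where "m \<ge> M" "restrict x {k m..<k (Suc m)} \<in> K m" unfolding INFM_nat_le by blast
      then show False using notK by blast
    qed
    then show False using inX cov by blast
  qed
qed


end
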